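(* Let $\beta>0$, $\gamma\ge0$, $0\le q<s<\infty$, and let $\mu$ be a finite positive Borel measure on $[0,1)$. The following are equivalent: (1) $\mu$ is a $\gamma$-logarithmic $s$-Carleson measure; (2) $\displaystyle\sup_{w\in\mathbb{D}}\int_{[0,1)}\frac{(1-|w|)^\beta\log^\gamma\frac{e}{1-|w|}}{(1-t)^q(1-|w|t)^{s+\beta-q}}\,d\mu(t)<\infty$; (3) $\displaystyle\sup_{w\in\mathbb{D}}\int_{[0,1)}\frac{(1-|w|)^\beta\log^\gamma\frac{e}{1-|w|}}{(1-t)^q|1-wt|^{s+\beta-q}}\,d\mu(t)<\infty$; (4) $\displaystyle\sup_{w\in\mathbb{D}}\int_{[0,1)}\frac{(1-|w|)^\beta\log^\gamma\frac{e}{1-t}}{(1-t)^q(1-|w|t)^{s+\beta-q}}\,d\mu(t)<\infty$.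
   Context: $\mathbb{D}$ is the open unit disc. For $\gamma\ge0$ and $s>0$, a finite positive Borel measure $\mu$ on $[0,1)$ is a $\gamma$-logarithmic $s$-Carleson measure if there is $C>0$ with $\log^\gamma\!\big(\frac{e}{1-t}\big)\mu([t,1))\le C(1-t)^s$ for all $t\in[0,1)$. *)

theory Defs
  imports "HOL-Analysis.Analysis"
begin

definition fin_borel_measure_on_01 :: "real measure \<Rightarrow> bool" where
  "fin_borel_measure_on_01 \<mu> \<longleftrightarrow>
     sets \<mu> = sets borel \<and> finite_measure \<mu> \<and> emeasure \<mu> (- {0..<1}) = 0"

definition log_carleson :: "real \<Rightarrow> real \<Rightarrow> real measure \<Rightarrow> bool" where
  "log_carleson \<gamma> s \<mu> \<longleftrightarrow>
     (\<exists>C>0. \<forall>t\<in>{0..<1::real}.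
        (ln (exp 1 / (1 - t))) powr \<gamma> * measure \<mu> {t..<1} \<le> C * (1 - t) powr s)"

end

theory Submission
  imports Defs "HOL-Real_Asymp.Real_Asymp"
begin

lemma shell_exists:
  fixes t :: real assumes "0 \<le> t" "t < 1"
  shows "\<exists>k::nat. (1/2)^(k+1) < 1 - t \<and> 1 - t \<le> (1/2)^k"
proof -
  define y where "y = log 2 (1/(1-t))"
  have y0: "y \<ge> 0" using assms by (simp add: y_def)
  define k where "k = nat \<lfloor>y\<rfloor>"
  have k1: "real k \<le> y" "y < real k + 1" using y0 by (auto simp: k_def)
  have "2 powr real k \<le> 2 powr y" using k1 by simp
  moreover have "2 powr y < 2 powr (real k + 1)" using k1 by simp
  moreover have "2 powr y = 1/(1-t)" using assms by (simp add: y_def)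
  ultimately have a: "2^k \<le> 1/(1-t)" "1/(1-t) < 2^(k+1)"
    by (simp_all add: powr_realpow powr_add)
  have "(1/2::real)^k = 1/2^k" by (simp add: power_divide)
  moreover have "(1/2::real)^(k+1) = 1/2^(k+1)" by (simp add: power_divide)
  ultimately show ?thesis using a assms
    by (intro exI[of _ k]) (auto simp: field_simps)
qed

lemma shell_bound:
  fixes \<mu> :: "real measure" and f :: "real \<Rightarrow> real" and c :: "nat \<Rightarrow> real"
  assumes sets: "sets \<mu> = sets borel"
    and fc: "\<And>k t. 0 \<le> t \<Longrightarrow> t < 1 \<Longrightarrow> (1/2)^(k+1) < 1 - t \<Longrightarrow> 1 - t \<le> (1/2)^k \<Longrightarrow> f t \<le> c k"
  shows "(\<integral>\<^sup>+ t\<in>{0..<1}. ennreal (f t) \<partial>\<mu>) \<le> (\<Sum>k. ennreal (c k) * emeasure \<mu> {1 - (1/2)^k..<1})"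
proof -
  have "(\<integral>\<^sup>+ t\<in>{0..<1}. ennreal (f t) \<partial>\<mu>) \<le> (\<integral>\<^sup>+ t. (\<Sum>k. ennreal (c k) * indicator {1 - (1/2)^k..<1::real} t) \<partial>\<mu>)"
  proof (rule nn_integral_mono)
    fix t :: real
    show "ennreal (f t) * indicator {0..<1} t \<le> (\<Sum>k. ennreal (c k) * indicator {1 - (1/2)^k..<1::real} t)"
    proof (cases "t \<in> {0..<1}")
      case True
      then obtain k where k: "(1/2)^(k+1) < 1 - t" "1 - t \<le> (1/2::real)^k" using shell_exists by auto
      have "ennreal (f t) * indicator {0..<1} t = ennreal (f t)" using True by simp
      also have "\<dots> \<le> ennreal (c k)" using fc[of t k] True k by (auto intro: ennreal_leI)
      also have "\<dots> = ennreal (c k) * indicator {1 - (1/2)^k..<1::real} t" using True k by simp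
      also have "\<dots> \<le> (\<Sum>i<Suc k. ennreal (c i) * indicator {1 - (1/2)^i..<1::real} t)"
        by (simp)
      also have "\<dots> \<le> (\<Sum>k. ennreal (c k) * indicator {1 - (1/2)^k..<1::real} t)"
        unfolding suminf_eq_SUP by (rule SUP_upper) auto
      finally show ?thesis .
    qed simp
  qed
  also have "\<dots> = (\<Sum>k. \<integral>\<^sup>+ t. ennreal (c k) * indicator {1 - (1/2)^k..<1::real} t \<partial>\<mu>)"
    by (rule nn_integral_suminf) (simp add: measurable_cong_sets[OF sets refl])
  also have "\<dots> = (\<Sum>k. ennreal (c k) * emeasure \<mu> {1 - (1/2)^k..<1})"
    using sets by (simp add: nn_integral_cmult_indicator)
  finally show ?thesis .
qed

lemma geom_bound:
  fixes x :: real assumes "x > 1"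
  shows "(\<Sum>k\<le>K. x^k) \<le> x^(K+1) / (x - 1)"
proof -
  have "(\<Sum>k\<le>K. x^k) = (\<Sum>k<Suc K. x^k)" by (simp add: lessThan_Suc_atMost)
  also have "\<dots> = (x^(Suc K) - 1)/(x - 1)" using assms
    by (subst sum_gp_strict) (auto simp: field_simps)
  also have "\<dots> \<le> x^(K+1)/(x-1)" using assms by (simp add: divide_right_mono)
  finally show ?thesis .
qed

lemma Glemma:
  fixes \<beta> G :: real assumes "\<beta> > 0" "G \<ge> 0"
  shows "\<exists>B. \<forall>K::nat. (\<Sum>k\<le>K. 2 powr (real k * \<beta>) / (1 + real k * ln 2) powr G)
            \<le> B * 2 powr (real K * \<beta>) / (1 + real K * ln 2) powr G"
proof -
  have "(\<lambda>K::nat. (real K + 1) * (1 + real K * ln 2) powr G / 2 powr (real K * \<beta> / 2)) \<longlonglongrightarrow> 0"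
    using assms by real_asymp
  then have "Bseq (\<lambda>K::nat. (real K + 1) * (1 + real K * ln 2) powr G / 2 powr (real K * \<beta> / 2))"
    using convergent_imp_Bseq convergentI by blast
  then obtain B0 where B0: "\<And>K::nat. norm ((real K + 1) * (1 + real K * ln 2) powr G / 2 powr (real K * \<beta> / 2)) \<le> B0"
    by (auto simp: Bseq_def)
  define x where "x = 2 powr \<beta>"
  have x1: "x > 1" using assms by (simp add: x_def)
  show ?thesis
  proof (intro exI[of _ "B0 + 2 powr G * x / (x - 1)"] allI)
    fix K :: nat
    define LK where "LK = (1 + real K * ln 2) powr G"
    have "1 + real K * ln 2 > 0" by (simp add: add_pos_nonneg)
    then have LKpos: "LK > 0" by (simp add: LK_def)
    have tm: "2 powr (real k * \<beta>) / (1 + real k * ln 2) powr G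
         \<le> 2 powr (real K * \<beta> / 2) + 2 powr G / LK * x^k" if "k \<le> K" for k
    proof (cases "2 * k \<le> K")
      case True
      have "(1 + real k * ln 2) powr G \<ge> 1" using assms by (intro ge_one_powr_ge_zero) auto
      then have "2 powr (real k * \<beta>) / (1 + real k * ln 2) powr G \<le> 2 powr (real k * \<beta>)"
        by (simp add: divide_le_eq)
      also have "\<dots> \<le> 2 powr (real K * \<beta> / 2)" using True assms
        by (intro powr_mono) (auto simp: field_simps)
      also have "\<dots> \<le> 2 powr (real K * \<beta> / 2) + 2 powr G / LK * x^k"
        using LKpos x1 by simp
      finally show ?thesis .
    next
      case False
      have pk: "1 + real k * ln 2 > 0" by (simp add: add_pos_nonneg)
      have "real K \<le> 2 * real k" using False by linarith
      then have "real K * ln 2 \<le> (2 * real k) * ln 2" by (intro mult_right_mono) auto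
      moreover have "2 * (1 + real k * ln 2) = 2 + (2 * real k) * ln 2" by (simp add: algebra_simps)
      ultimately have "1 + real K * ln 2 \<le> 2 * (1 + real k * ln 2)" by linarith
      then have "LK \<le> (2 * (1 + real k * ln 2)) powr G" unfolding LK_def using assms
        by (intro powr_mono2) (auto simp: add_pos_nonneg)
      also have "\<dots> = 2 powr G * (1 + real k * ln 2) powr G" using pk by (subst powr_mult) auto
      finally have LK: "LK \<le> 2 powr G * (1 + real k * ln 2) powr G" .
      have "2 powr (real k * \<beta>) / (1 + real k * ln 2) powr G \<le> 2 powr G / LK * x^k"
      proof -
        have xk: "x^k = 2 powr (real k * \<beta>)" unfolding x_def
          by (simp add: powr_realpow[symmetric] powr_powr mult.commute)
        have "2 powr (real k * \<beta>) * LK \<le> 2 powr (real k * \<beta>) * (2 powr G * (1 + real k * ln 2) powr G)"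
          using LK by (intro mult_left_mono) auto
        then show ?thesis using LKpos pk unfolding xk by (simp add: field_simps)
      qed
      moreover have "0 \<le> 2 powr (real K * \<beta> / 2)" by simp
      ultimately show ?thesis by linarith
    qed
    have "(\<Sum>k\<le>K. 2 powr (real k * \<beta>) / (1 + real k * ln 2) powr G)
        \<le> (\<Sum>k\<le>K. 2 powr (real K * \<beta> / 2) + 2 powr G / LK * x^k)"
      by (intro sum_mono tm) auto
    also have "\<dots> = (real K + 1) * 2 powr (real K * \<beta> / 2) + 2 powr G / LK * (\<Sum>k\<le>K. x^k)"
      by (simp add: sum.distrib sum_distrib_left)
    also have "\<dots> \<le> B0 * 2 powr (real K * \<beta>) / LK + 2 powr G / LK * (x^(K+1) / (x - 1))"
    proof (intro add_mono mult_left_mono geom_bound x1)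
      have "(real K + 1) * LK / 2 powr (real K * \<beta> / 2) \<le> B0" using B0[of K] LKpos
        by (simp add: LK_def)
      then have "(real K + 1) * LK \<le> B0 * 2 powr (real K * \<beta> / 2)" by (simp add: divide_le_eq)
      then have "(real K + 1) * LK * 2 powr (real K * \<beta> / 2) \<le> B0 * 2 powr (real K * \<beta> / 2) * 2 powr (real K * \<beta> / 2)"
        by (intro mult_right_mono) auto
      also have "\<dots> = B0 * 2 powr (real K * \<beta>)" by (simp add: mult.assoc powr_add[symmetric] mult.commute)
      finally show "(real K + 1) * 2 powr (real K * \<beta> / 2) \<le> B0 * 2 powr (real K * \<beta>) / LK"
        using LKpos by (simp add: field_simps)
    qed (use LKpos in auto)
    also have "\<dots> = (B0 + 2 powr G * x / (x - 1)) * 2 powr (real K * \<beta>) / LK"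
    proof -
      have xk: "x^(K+1) = x * 2 powr (real K * \<beta>)" unfolding x_def
        by (simp add: powr_realpow[symmetric] powr_powr mult.commute)
      show ?thesis unfolding xk using x1 LKpos by (simp add: field_simps)
    qed
    finally show "(\<Sum>k\<le>K. 2 powr (real k * \<beta>) / (1 + real k * ln 2) powr G)
            \<le> (B0 + 2 powr G * x / (x - 1)) * 2 powr (real K * \<beta>) / (1 + real K * ln 2) powr G"
      by (simp add: LK_def)
  qed
qed

lemma hp: "((1/2::real)^j) powr x = 2 powr (- (real j * x))"
proof -
  have "(2::real) powr (- real j) = 1 / 2^j"
    by (simp only: powr_minus powr_realpow[of 2 j, simplified] inverse_eq_divide)
  also have "\<dots> = (1/2::real)^j" by (simp only: power_one_over)
  finally have "(1/2::real)^j = 2 powr (- real j)" by simp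
  then show ?thesis by (simp add: powr_powr)
qed

lemma p3: "(2::real) powr x / (2 powr y * 2 powr z) = 2 powr (x - y - z)"
proof -
  have "(2::real) powr (x - y - z) = 2 powr x / 2 powr y / 2 powr z" by (simp only: powr_diff)
  then show ?thesis by (simp only: divide_divide_eq_left)
qed

lemma geo_tail:
  fixes y :: real assumes "y \<noteq> 1"
  shows "(\<Sum>k<n. if K < k then y^k else 0) = (if K < n then (y^(K+1) - y^n)/(1-y) else 0)"
proof (induction n)
  case 0 then show ?case by simp
next
  case (Suc n)
  have "1 - y \<noteq> 0" using assms by simp
  show ?case
  proof (cases "K < n")
    case True
    have "(\<Sum>k<Suc n. if K < k then y^k else 0) = (y^(K+1)-y^n)/(1-y) + y^n"
      using Suc True by simp
    also have "\<dots> = (y^(K+1) - y^Suc n)/(1-y)" using \<open>1 - y \<noteq> 0\<close> by (simp add: field_simps)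
    finally show ?thesis using True by simp
  next
    case False
    have z: "(\<Sum>k<n. if K < k then y^k else 0) = 0" using Suc False by simp
    show ?thesis
    proof (cases "K = n")
      case True
      then show ?thesis using z by simp
    next
      case False2: False
      then show ?thesis using z False by simp
    qed
  qed
qed

lemma series:
  fixes \<beta> G q s :: real
  assumes b: "\<beta> > 0" and G: "G \<ge> 0" and q: "q \<ge> 0" and qs: "q < s"
  shows "\<exists>M. \<forall>d. 0 < d \<longrightarrow> d \<le> 1 \<longrightarrow> (\<forall>n. (\<Sum>k<n. d powr \<beta> * (ln (exp 1 / d)) powr G /
      (((1/2)^(k+1)) powr q * (max d ((1/2)^(k+1))) powr (s+\<beta>-q)) *
      (((1/2)^k) powr s / (1 + real k * ln 2) powr G)) \<le> M)"
proof -
  obtain B where B: "\<And>K::nat. (\<Sum>k\<le>K. 2 powr (real k * \<beta>) / (1 + real k * ln 2) powr G)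
            \<le> B * 2 powr (real K * \<beta>) / (1 + real K * ln 2) powr G"
    using Glemma[OF b G] by blast
  have B0: "B \<ge> 0" using B[of 0] by simp
  define a where "a = s - q"
  define e where "e = s + \<beta> - q"
  define y :: real where "y = 2 powr (-a)"
  have a0: "a > 0" and e0: "e > 0" using qs b by (auto simp: a_def e_def)
  have y0: "y > 0" and y1: "y < 1" using a0 by (auto simp: y_def powr_less_one)
  have yk: "y^k = 2 powr (- (real k * a))" for k
    unfolding y_def by (simp add: powr_realpow[symmetric] powr_powr mult.commute)
  show ?thesis
  proof (intro exI[of _ "2 powr (q+e) * B * 2 powr \<beta> + 2 powr q * y / (1 - y)"] allI impI)
    fix d :: real and n :: nat
    assume d0: "0 < d" and d1: "d \<le> 1"
    define L where "L = ln (exp 1 / d)"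
    have L: "L = 1 - ln d" using d0 by (simp add: L_def ln_div)
    have lnd: "ln d \<le> 0" using d0 d1 by simp
    define K where "K = nat \<lceil>- ln d / ln 2\<rceil>"
    have K1: "- ln d / ln 2 \<le> real K" "real K < - ln d / ln 2 + 1"
    proof -
      have "- ln d / ln 2 \<ge> 0" using lnd by (simp add: divide_nonpos_pos)
      then have "real K = of_int \<lceil>- ln d / ln 2\<rceil>" by (simp add: K_def)
      then show "- ln d / ln 2 \<le> real K" "real K < - ln d / ln 2 + 1"
        using ceiling_correct[of "- ln d / ln 2"] by linarith+
    qed
    have K2: "- ln d \<le> real K * ln 2" "real K * ln 2 < - ln d + ln 2"
    proof -
      have "- ln d = (- ln d / ln 2) * ln 2" by simp
      then show "- ln d \<le> real K * ln 2" "real K * ln 2 < - ln d + ln 2"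
        using K1 mult_right_mono[OF K1(1), of "ln 2"] mult_strict_right_mono[OF K1(2), of "ln 2"]
        by (auto simp: algebra_simps)
    qed
    define l where "l k = 1 + real k * ln 2" for k :: nat
    have lpos: "l k \<ge> 1" for k by (simp add: l_def)
    have Lpos: "L \<ge> 1" using L lnd by simp
    have LlK: "L \<le> l K" using L K2 by (simp add: l_def)
    have Llk: "L \<le> l k" if "K < k" for k
    proof -
      have "real K * ln 2 \<le> real k * ln 2" using that by (intro mult_right_mono) auto
      then show ?thesis using LlK unfolding l_def by linarith
    qed
    have dK: "d powr \<beta> * 2 powr (real K * \<beta>) \<le> 2 powr \<beta>"
    proof -
      have e1: "d powr \<beta> = exp (\<beta> * ln d)" using d0 by (simp add: powr_def)
      have e2: "(2::real) powr (real K * \<beta>) = exp ((real K * \<beta>) * ln 2)" by (simp add: powr_def)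
      have e3: "\<beta> * ln d + (real K * \<beta>) * ln 2 = \<beta> * (ln d + real K * ln 2)"
        by (simp only: distrib_left mult.commute mult.left_commute)
      have "d powr \<beta> * 2 powr (real K * \<beta>) = exp (\<beta> * (ln d + real K * ln 2))"
        unfolding e1 e2 exp_add[symmetric] e3 ..
      also have "\<dots> \<le> exp (\<beta> * ln 2)"
      proof -
        have "ln d + real K * ln 2 \<le> ln 2" using K2 by linarith
        then have "\<beta> * (ln d + real K * ln 2) \<le> \<beta> * ln 2" using b by (intro mult_left_mono) auto
        then show ?thesis by simp
      qed
      also have "\<dots> = 2 powr \<beta>" by (simp add: powr_def)
      finally show ?thesis .
    qed
    have dK2: "d powr (-a) * y^K \<le> 1"
    proof -
      have e1: "d powr (-a) = exp ((-a) * ln d)" using d0 by (simp add: powr_def)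
      have e2: "y^K = exp ((- (real K * a)) * ln 2)" unfolding yk by (simp add: powr_def)
      have e3: "(-a) * ln d + (- (real K * a)) * ln 2 = - (a * (ln d + real K * ln 2))"
        by (simp only: distrib_left mult.commute mult.left_commute minus_mult_left minus_add_distrib)
      have "d powr (-a) * y^K = exp (- (a * (ln d + real K * ln 2)))"
        unfolding e1 e2 exp_add[symmetric] e3 ..
      also have "\<dots> \<le> exp 0"
      proof -
        have "0 \<le> ln d + real K * ln 2" using K2 by linarith
        then have "0 \<le> a * (ln d + real K * ln 2)" using a0 by simp
        then show ?thesis by simp
      qed
      finally show ?thesis by simp
    qed
    define T where "T k = d powr \<beta> * L powr G /
      (((1/2)^(k+1)) powr q * (max d ((1/2)^(k+1))) powr e) *
      (((1/2::real)^k) powr s / (l k) powr G)" for k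
    define P where "P = d powr \<beta> * L powr G"
    have P0: "P \<ge> 0" by (simp add: P_def)
    define A where "A k = 2 powr (q+e) * P * (2 powr (real k * \<beta>) / l k powr G)" for k
    have A0: "A k \<ge> 0" for k by (simp add: A_def P0)
    have TA: "T k \<le> A k" for k
    proof -
      have m: "((1/2::real)^(k+1)) powr e \<le> (max d ((1/2)^(k+1))) powr e"
        using e0 by (intro powr_mono2) auto
      have "T k \<le> P / (((1/2)^(k+1)) powr q * ((1/2::real)^(k+1)) powr e) * (((1/2::real)^k) powr s / (l k) powr G)"
        unfolding T_def P_def[symmetric]
        by (intro mult_right_mono divide_left_mono mult_left_mono m P0) (use d0 in \<open>auto simp: zero_less_mult_iff max_def\<close>)
      also have "\<dots> = P * (2 powr (- (real k * s)) / (2 powr (- (real (k+1) * q)) * 2 powr (- (real (k+1) * e)))) / l k powr G"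
        unfolding hp by simp
      also have "\<dots> = P * 2 powr (- (real k * s) - (- (real (k+1) * q)) - (- (real (k+1) * e))) / l k powr G"
        by (simp only: p3)
      also have "- (real k * s) - (- (real (k+1) * q)) - (- (real (k+1) * e)) = (q+e) + real k * \<beta>"
        by (simp add: e_def algebra_simps)
      also have "P * 2 powr ((q+e) + real k * \<beta>) / l k powr G = A k"
        by (simp add: A_def powr_add)
      finally show ?thesis .
    qed
    have TB: "T k \<le> 2 powr q * (d powr (-a) * y^k)" if "K < k" for k
    proof -
      have m: "d powr e \<le> (max d ((1/2)^(k+1))) powr e"
        using e0 d0 by (intro powr_mono2) auto
      have "T k \<le> P / (((1/2)^(k+1)) powr q * d powr e) * (((1/2::real)^k) powr s / (l k) powr G)"
        unfolding T_def P_def[symmetric]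
        by (intro mult_right_mono divide_left_mono mult_left_mono m P0) (use d0 in \<open>auto simp: zero_less_mult_iff max_def\<close>)
      also have "\<dots> = (d powr \<beta> / d powr e) * (2 powr (- (real k * s)) / 2 powr (- (real (k+1) * q))) * (L powr G / l k powr G)"
        unfolding hp P_def by (simp add: divide_inverse inverse_mult_distrib mult_ac)
      finally have T1: "T k \<le> (d powr \<beta> / d powr e) * (2 powr (- (real k * s)) / 2 powr (- (real (k+1) * q))) * (L powr G / l k powr G)" .
      have E1: "d powr \<beta> / d powr e = d powr (-a)"
        by (simp add: powr_diff[symmetric] a_def e_def)
      have "2 powr (- (real k * s)) / 2 powr (- (real (k+1) * q)) = 2 powr (- (real k * s) - (- (real (k+1) * q)))"
        by (rule powr_diff[symmetric])
      also have "- (real k * s) - (- (real (k+1) * q)) = q + (- (real k * a))"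
        by (simp add: a_def algebra_simps)
      also have "(2::real) powr (q + (- (real k * a))) = 2 powr q * y^k"
        by (simp only: yk powr_add)
      finally have E2: "2 powr (- (real k * s)) / 2 powr (- (real (k+1) * q)) = 2 powr q * y^k" .
      have E3: "L powr G / l k powr G \<le> 1"
      proof -
        have "L powr G \<le> l k powr G" using Llk[OF that] Lpos G by (intro powr_mono2) auto
        then show ?thesis using lpos[of k] by (simp add: divide_le_eq)
      qed
      have "T k \<le> d powr (-a) * (2 powr q * y^k) * (L powr G / l k powr G)"
        using T1 unfolding E1 E2 .
      also have "\<dots> \<le> d powr (-a) * (2 powr q * y^k) * 1"
        using E3 y0 by (intro mult_left_mono) auto
      finally show ?thesis by (simp add: mult_ac)
    qed
    have Tsplit: "T k \<le> (if k \<le> K then A k else 0) + 2 powr q * d powr (-a) * (if K < k then y^k else 0)" for k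
    proof (cases "k \<le> K")
      case True
      then show ?thesis using TA[of k] by simp
    next
      case False
      then show ?thesis using TB[of k] by (simp add: mult_ac)
    qed
    have "(\<Sum>k<n. T k) \<le> (\<Sum>k<n. (if k \<le> K then A k else 0) + 2 powr q * d powr (-a) * (if K < k then y^k else 0))"
      by (rule sum_mono) (rule Tsplit)
    also have "\<dots> = (\<Sum>k<n. (if k \<le> K then A k else 0)) + 2 powr q * d powr (-a) * (\<Sum>k<n. if K < k then y^k else 0)"
      by (simp add: sum.distrib sum_distrib_left)
    finally have S1: "(\<Sum>k<n. T k) \<le> (\<Sum>k<n. (if k \<le> K then A k else 0)) + 2 powr q * d powr (-a) * (\<Sum>k<n. if K < k then y^k else 0)" .
    have S2: "(\<Sum>k<n. (if k \<le> K then A k else 0)) \<le> (\<Sum>k\<le>K. A k)"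
    proof -
      have "(\<Sum>k<n. (if k \<le> K then A k else 0)) = (\<Sum>k\<in>{..<n} \<inter> {k. k \<le> K}. A k)"
        by (simp add: sum.inter_restrict)
      also have "\<dots> \<le> (\<Sum>k\<le>K. A k)" by (intro sum_mono2 A0) auto
      finally show ?thesis .
    qed
    have S3: "(\<Sum>k\<le>K. A k) \<le> 2 powr (q+e) * B * 2 powr \<beta>"
    proof -
      have "(\<Sum>k\<le>K. A k) = 2 powr (q+e) * P * (\<Sum>k\<le>K. 2 powr (real k * \<beta>) / l k powr G)"
        by (simp add: A_def sum_distrib_left)
      also have "\<dots> \<le> 2 powr (q+e) * P * (B * 2 powr (real K * \<beta>) / l K powr G)"
        using B[of K] P0 by (intro mult_left_mono) (auto simp: l_def)
      also have "\<dots> = 2 powr (q+e) * B * (d powr \<beta> * 2 powr (real K * \<beta>)) * (L powr G / l K powr G)"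
        by (simp add: P_def)
      also have "\<dots> \<le> 2 powr (q+e) * B * 2 powr \<beta> * 1"
      proof (intro mult_mono dK mult_left_mono)
        have "L powr G \<le> l K powr G" using LlK Lpos G by (intro powr_mono2) auto
        then show "L powr G / l K powr G \<le> 1" using lpos[of K] by (simp add: divide_le_eq)
      qed (use B0 in auto)
      finally show ?thesis by simp
    qed
    have S4: "2 powr q * d powr (-a) * (\<Sum>k<n. if K < k then y^k else 0) \<le> 2 powr q * y / (1 - y)"
    proof -
      have "(\<Sum>k<n. if K < k then y^k else 0) \<le> y^(K+1) / (1 - y)"
        using y0 y1 by (simp add: geo_tail divide_right_mono)
      then have "2 powr q * d powr (-a) * (\<Sum>k<n. if K < k then y^k else 0) \<le> 2 powr q * d powr (-a) * (y^(K+1) / (1 - y))"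
        by (intro mult_left_mono) auto
      also have "\<dots> = 2 powr q * y * (d powr (-a) * y^K) / (1 - y)" by simp
      also have "\<dots> \<le> 2 powr q * y * 1 / (1 - y)"
        using dK2 y0 y1 by (intro divide_right_mono mult_left_mono) auto
      finally show ?thesis by simp
    qed
    have fin: "(\<Sum>k<n. T k) \<le> 2 powr (q+e) * B * 2 powr \<beta> + 2 powr q * y / (1 - y)" using S1 S2 S3 S4 by linarith
    have eqT: "(\<Sum>k<n. d powr \<beta> * (ln (exp 1 / d)) powr G /
      (((1/2)^(k+1)) powr q * (max d ((1/2)^(k+1))) powr (s+\<beta>-q)) *
      (((1/2)^k) powr s / (1 + real k * ln 2) powr G)) = (\<Sum>k<n. T k)"
      by (simp only: T_def L_def l_def e_def)
    show "(\<Sum>k<n. d powr \<beta> * (ln (exp 1 / d)) powr G /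
      (((1/2)^(k+1)) powr q * (max d ((1/2)^(k+1))) powr (s+\<beta>-q)) *
      (((1/2)^k) powr s / (1 + real k * ln 2) powr G)) \<le> 2 powr (q+e) * B * 2 powr \<beta> + 2 powr q * y / (1 - y)"
      using eqT fin by (rule ord_eq_le_trans)
  qed
qed

lemma Lk: "ln (exp 1 / (1/2::real)^k) = 1 + real k * ln 2"
proof -
  have "ln (exp 1 / (1/2::real)^k) = ln (exp 1) - ln ((1/2::real)^k)"
    by (simp add: ln_div)
  also have "ln ((1/2::real)^k) = real k * ln (1/2)" by (simp add: ln_realpow)
  also have "ln (1/2::real) = - ln 2" by (simp add: ln_div)
  finally show ?thesis by simp
qed

lemma carleson_tail:
  assumes "log_carleson \<gamma> s \<mu>" "finite_measure \<mu>"
  obtains C where "C > 0" "\<And>k. measure \<mu> {1 - (1/2)^k..<1} \<le> C * (((1/2::real)^k) powr s / (1 + real k * ln 2) powr \<gamma>)"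
proof -
  obtain C where C: "C > 0" "\<And>t. t \<in> {0..<1::real} \<Longrightarrow>
        (ln (exp 1 / (1 - t))) powr \<gamma> * measure \<mu> {t..<1} \<le> C * (1 - t) powr s"
    using assms(1) unfolding log_carleson_def by blast
  have "measure \<mu> {1 - (1/2)^k..<1} \<le> C * (((1/2::real)^k) powr s / (1 + real k * ln 2) powr \<gamma>)" for k
  proof -
    have hk: "0 < (1/2::real)^k" "(1/2::real)^k \<le> 1" by (auto simp: power_le_one)
    then have "1 - (1/2)^k \<in> {0..<1::real}" by auto
    from C(2)[OF this] have "(1 + real k * ln 2) powr \<gamma> * measure \<mu> {1 - (1/2)^k..<1} \<le> C * ((1/2::real)^k) powr s"
      by (simp add: Lk)
    moreover have "1 + real k * ln 2 > 0" by (simp add: add_pos_nonneg)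
    then have "(1 + real k * ln 2) powr \<gamma> > 0" by simp
    ultimately show ?thesis by (simp add: field_simps)
  qed
  with C(1) that show ?thesis by blast
qed

lemma sum_bound:
  fixes \<mu> :: "real measure"
  assumes fm: "finite_measure \<mu>"
    and b: "\<And>k. measure \<mu> {1 - (1/2)^k..<1} \<le> b k"
    and c: "\<And>k. c k \<ge> 0"
    and M: "\<And>n. (\<Sum>k<n. c k * b k) \<le> M"
  shows "(\<Sum>k. ennreal (c k) * emeasure \<mu> {1 - (1/2)^k..<1}) \<le> ennreal M"
proof -
  have bk0: "b k \<ge> 0" for k using b[of k] measure_nonneg[of \<mu>] order_trans by blast
  have e: "ennreal (c k) * emeasure \<mu> {1 - (1/2)^k..<1} \<le> ennreal (c k * b k)" for k
  proof -
    have "emeasure \<mu> {1 - (1/2)^k..<1} = ennreal (measure \<mu> {1 - (1/2)^k..<1})"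
      using fm by (simp add: finite_measure.emeasure_eq_measure)
    also have "\<dots> \<le> ennreal (b k)" using b by (intro ennreal_leI) auto
    finally have "ennreal (c k) * emeasure \<mu> {1 - (1/2)^k..<1} \<le> ennreal (c k) * ennreal (b k)"
      by (intro mult_left_mono) auto
    also have "\<dots> = ennreal (c k * b k)" using c[of k] bk0[of k] by (simp add: ennreal_mult)
    finally show ?thesis .
  qed
  show ?thesis
    unfolding suminf_eq_SUP
  proof (rule SUP_least)
    fix n
    have "(\<Sum>k<n. ennreal (c k) * emeasure \<mu> {1 - (1/2)^k..<1}) \<le> (\<Sum>k<n. ennreal (c k * b k))"
      by (intro sum_mono e)
    also have "\<dots> = ennreal (\<Sum>k<n. c k * b k)"
      using c bk0 by (intro sum_ennreal) auto
    also have "\<dots> \<le> ennreal M" using M by (intro ennreal_leI) auto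
    finally show "(\<Sum>k<n. ennreal (c k) * emeasure \<mu> {1 - (1/2)^k..<1}) \<le> ennreal M" .
  qed
qed

lemma sup_fin:
  assumes "(SUP w\<in>A. f w) < (\<infinity>::ennreal)"
  obtains M where "\<And>w. w \<in> A \<Longrightarrow> f w \<le> ennreal M"
proof -
  have "f w \<le> ennreal (enn2real (SUP w\<in>A. f w))" if "w \<in> A" for w
  proof -
    have "f w \<le> (SUP w\<in>A. f w)" using that by (rule SUP_upper)
    also have "\<dots> = ennreal (enn2real (SUP w\<in>A. f w))" using assms by (simp add: ennreal_enn2real less_top)
    finally show ?thesis .
  qed
  then show ?thesis using that by blast
qed

lemma sup_le:
  assumes "\<And>w. w \<in> A \<Longrightarrow> f w \<le> ennreal M"
  shows "(SUP w\<in>A. f w) < (\<infinity>::ennreal)"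
proof -
  have "(SUP w\<in>A. f w) \<le> ennreal M" using assms by (rule SUP_least)
  also have "\<dots> < \<infinity>" by simp
  finally show ?thesis .
qed

lemma upper2:
  fixes \<beta> \<gamma> q s :: real and \<mu> :: "real measure"
  assumes b: "\<beta> > 0" and g: "\<gamma> \<ge> 0" and q: "0 \<le> q" and qs: "q < s"
    and fin: "fin_borel_measure_on_01 \<mu>" and car: "log_carleson \<gamma> s \<mu>"
  shows "\<exists>M. \<forall>r. 0 \<le> r \<longrightarrow> r < 1 \<longrightarrow> (\<integral>\<^sup>+ t\<in>{0..<1}.
         ennreal ((1 - r) powr \<beta> * (ln (exp 1 / (1 - r))) powr \<gamma> /
                  ((1 - t) powr q * (1 - r * t) powr (s + \<beta> - q))) \<partial>\<mu>) \<le> ennreal M"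
proof -
  have sets: "sets \<mu> = sets borel" and fm: "finite_measure \<mu>" using fin by (auto simp: fin_borel_measure_on_01_def)
  obtain C where C0: "C > 0" and C: "\<And>k. measure \<mu> {1 - (1/2)^k..<1} \<le> C * (((1/2::real)^k) powr s / (1 + real k * ln 2) powr \<gamma>)"
    using carleson_tail[OF car fm] by blast
  obtain Ms where Ms: "\<forall>d. 0 < d \<longrightarrow> d \<le> 1 \<longrightarrow> (\<forall>n. (\<Sum>k<n. d powr \<beta> * (ln (exp 1 / d)) powr \<gamma> /
      (((1/2)^(k+1)) powr q * (max d ((1/2)^(k+1))) powr (s+\<beta>-q)) *
      (((1/2)^k) powr s / (1 + real k * ln 2) powr \<gamma>)) \<le> Ms)"
    using series[OF b g q qs] by blast
  define e where "e = s + \<beta> - q"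
  have e0: "e > 0" using qs b by (simp add: e_def)
  show ?thesis
  proof (intro exI[of _ "C * Ms"] allI impI)
    fix r :: real assume r0: "0 \<le> r" and r1: "r < 1"
    define d where "d = 1 - r"
    have d0: "0 < d" "d \<le> 1" using r0 r1 by (auto simp: d_def)
    define c where "c k = d powr \<beta> * (ln (exp 1 / d)) powr \<gamma> / (((1/2)^(k+1)) powr q * (max d ((1/2)^(k+1))) powr e)" for k :: nat
    have c0: "c k \<ge> 0" for k by (simp add: c_def)
    have pw: "d powr \<beta> * (ln (exp 1 / d)) powr \<gamma> / ((1 - t) powr q * (1 - r * t) powr e) \<le> c k"
      if t: "0 \<le> t" "t < 1" "(1/2)^(k+1) < 1 - t" "1 - t \<le> (1/2)^k" for t k
    proof -
      have hpos: "(0::real) < (1/2)^(k+1)" by simp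
      have A: "((1/2::real)^(k+1)) powr q \<le> (1 - t) powr q"
        using t q by (intro powr_mono2) auto
      have rt1: "r * t \<le> r" using r0 t by (simp add: mult_left_le)
      have rt2: "r * t \<le> t" using mult_right_mono[of r 1 t] r1 t(1) by simp
      have Bm: "max d ((1/2)^(k+1)) \<le> 1 - r * t" using rt1 rt2 t by (auto simp: d_def)
      have B: "(max d ((1/2)^(k+1))) powr e \<le> (1 - r * t) powr e"
        using Bm e0 d0 by (intro powr_mono2) auto
      have pos: "0 < ((1/2::real)^(k+1)) powr q * (max d ((1/2)^(k+1))) powr e"
        using hpos d0 by (intro mult_pos_pos) auto
      have den: "((1/2::real)^(k+1)) powr q * (max d ((1/2)^(k+1))) powr e \<le> (1 - t) powr q * (1 - r * t) powr e"
        using A B by (intro mult_mono) auto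
      show ?thesis unfolding c_def
        by (rule divide_left_mono[OF den]) (use pos den in auto)
    qed
    have "(\<integral>\<^sup>+ t\<in>{0..<1}. ennreal (d powr \<beta> * (ln (exp 1 / d)) powr \<gamma> /
                  ((1 - t) powr q * (1 - r * t) powr e)) \<partial>\<mu>)
          \<le> (\<Sum>k. ennreal (c k) * emeasure \<mu> {1 - (1/2)^k..<1})"
      by (rule shell_bound[OF sets]) (rule pw)
    also have "\<dots> \<le> ennreal (C * Ms)"
    proof (rule sum_bound[OF fm C c0])
      fix n
      have "(\<Sum>k<n. c k * (C * (((1/2::real)^k) powr s / (1 + real k * ln 2) powr \<gamma>)))
          = C * (\<Sum>k<n. c k * (((1/2::real)^k) powr s / (1 + real k * ln 2) powr \<gamma>))"
        by (simp add: sum_distrib_left mult_ac)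
      also have "\<dots> \<le> C * Ms"
        using Ms d0 C0 by (intro mult_left_mono) (auto simp: c_def e_def)
      finally show "(\<Sum>k<n. c k * (C * (((1/2::real)^k) powr s / (1 + real k * ln 2) powr \<gamma>))) \<le> C * Ms" .
    qed
    finally show "(\<integral>\<^sup>+ t\<in>{0..<1}.
         ennreal ((1 - r) powr \<beta> * (ln (exp 1 / (1 - r))) powr \<gamma> /
                  ((1 - t) powr q * (1 - r * t) powr (s + \<beta> - q))) \<partial>\<mu>) \<le> ennreal (C * Ms)"
      by (simp add: d_def e_def)
  qed
qed

lemma upper4:
  fixes \<beta> \<gamma> q s :: real and \<mu> :: "real measure"
  assumes b: "\<beta> > 0" and g: "\<gamma> \<ge> 0" and q: "0 \<le> q" and qs: "q < s"
    and fin: "fin_borel_measure_on_01 \<mu>" and car: "log_carleson \<gamma> s \<mu>"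
  shows "\<exists>M. \<forall>r. 0 \<le> r \<longrightarrow> r < 1 \<longrightarrow> (\<integral>\<^sup>+ t\<in>{0..<1}.
         ennreal ((1 - r) powr \<beta> * (ln (exp 1 / (1 - t))) powr \<gamma> /
                  ((1 - t) powr q * (1 - r * t) powr (s + \<beta> - q))) \<partial>\<mu>) \<le> ennreal M"
proof -
  have sets: "sets \<mu> = sets borel" and fm: "finite_measure \<mu>" using fin by (auto simp: fin_borel_measure_on_01_def)
  obtain C where C0: "C > 0" and C: "\<And>k. measure \<mu> {1 - (1/2)^k..<1} \<le> C * (((1/2::real)^k) powr s / (1 + real k * ln 2) powr \<gamma>)"
    using carleson_tail[OF car fm] by blast
  obtain Ms where Ms: "\<forall>d. 0 < d \<longrightarrow> d \<le> 1 \<longrightarrow> (\<forall>n. (\<Sum>k<n. d powr \<beta> * (ln (exp 1 / d)) powr 0 /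
      (((1/2)^(k+1)) powr q * (max d ((1/2)^(k+1))) powr (s+\<beta>-q)) *
      (((1/2)^k) powr s / (1 + real k * ln 2) powr 0)) \<le> Ms)"
    using series[OF b _ q qs, of 0] by auto
  define e where "e = s + \<beta> - q"
  have e0: "e > 0" using qs b by (simp add: e_def)
  show ?thesis
  proof (intro exI[of _ "C * (2 powr \<gamma> * Ms)"] allI impI)
    fix r :: real assume r0: "0 \<le> r" and r1: "r < 1"
    define d where "d = 1 - r"
    have d0: "0 < d" "d \<le> 1" using r0 r1 by (auto simp: d_def)
    define den where "den k = ((1/2::real)^(k+1)) powr q * (max d ((1/2)^(k+1))) powr e" for k :: nat
    have denpos: "den k > 0" for k using d0 unfolding den_def by (intro mult_pos_pos) auto
    define c where "c k = d powr \<beta> * (1 + real (k+1) * ln 2) powr \<gamma> / den k" for k :: nat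
    have c0: "c k \<ge> 0" for k using denpos[of k] by (simp add: c_def)
    have pw: "d powr \<beta> * (ln (exp 1 / (1 - t))) powr \<gamma> / ((1 - t) powr q * (1 - r * t) powr e) \<le> c k"
      if t: "0 \<le> t" "t < 1" "(1/2)^(k+1) < 1 - t" "1 - t \<le> (1/2)^k" for t k
    proof -
      have hpos: "(0::real) < (1/2)^(k+1)" by simp
      have A: "((1/2::real)^(k+1)) powr q \<le> (1 - t) powr q"
        using t q by (intro powr_mono2) auto
      have rt1: "r * t \<le> r" using r0 t by (simp add: mult_left_le)
      have rt2: "r * t \<le> t" using mult_right_mono[of r 1 t] r1 t(1) by simp
      have Bm: "max d ((1/2)^(k+1)) \<le> 1 - r * t" using rt1 rt2 t by (auto simp: d_def)
      have B: "(max d ((1/2)^(k+1))) powr e \<le> (1 - r * t) powr e"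
        using Bm e0 d0 by (intro powr_mono2) auto
      have den: "den k \<le> (1 - t) powr q * (1 - r * t) powr e"
        unfolding den_def using A B by (intro mult_mono) auto
      have L0: "0 \<le> ln (exp 1 / (1 - t))"
      proof -
        have "1 \<le> exp (1::real)" by simp
        also have "exp 1 \<le> exp 1 / (1 - t)" using t by (simp add: le_divide_eq)
        finally show ?thesis by simp
      qed
      have L1: "ln (exp 1 / (1 - t)) \<le> 1 + real (k+1) * ln 2"
      proof -
        have "exp 1 / (1 - t) \<le> exp 1 / (1/2)^(k+1)"
          using t hpos by (intro divide_left_mono) auto
        then have "ln (exp 1 / (1 - t)) \<le> ln (exp 1 / (1/2::real)^(k+1))"
          using t by (subst ln_le_cancel_iff) auto
        then show ?thesis by (simp only: Lk)
      qed
      have N: "d powr \<beta> * (ln (exp 1 / (1 - t))) powr \<gamma> \<le> d powr \<beta> * (1 + real (k+1) * ln 2) powr \<gamma>"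
        using L0 L1 g by (intro mult_left_mono powr_mono2) auto
      show ?thesis unfolding c_def
        by (rule frac_le[OF _ N denpos den]) (simp add: add_pos_nonneg)
    qed
    have "(\<integral>\<^sup>+ t\<in>{0..<1}. ennreal (d powr \<beta> * (ln (exp 1 / (1 - t))) powr \<gamma> /
                  ((1 - t) powr q * (1 - r * t) powr e)) \<partial>\<mu>)
          \<le> (\<Sum>k. ennreal (c k) * emeasure \<mu> {1 - (1/2)^k..<1})"
      by (rule shell_bound[OF sets]) (rule pw)
    also have "\<dots> \<le> ennreal (C * (2 powr \<gamma> * Ms))"
    proof (rule sum_bound[OF fm C c0])
      fix n
      have tk: "c k * (((1/2::real)^k) powr s / (1 + real k * ln 2) powr \<gamma>) \<le>
         2 powr \<gamma> * (d powr \<beta> * (ln (exp 1 / d)) powr 0 / den k * (((1/2)^k) powr s / (1 + real k * ln 2) powr 0))" for k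
      proof -
        have lk: "1 + real k * ln 2 > 0" by (simp add: add_pos_nonneg)
        have ld: "ln (exp 1 / d) \<noteq> 0"
        proof -
          have "(1::real) < exp 1" by simp
          then have "d < exp 1" using d0 by linarith
          then have "exp 1 / d > 1" using d0 by (simp add: less_divide_eq)
          then show ?thesis using ln_gt_zero[of "exp 1 / d"] by linarith
        qed
        have "1 + real (k+1) * ln 2 \<le> 2 * (1 + real k * ln 2)"
        proof -
          have l2: "ln (2::real) \<le> 1" using ln_le_minus_one[of 2] by simp
          have x0: "0 \<le> real k * ln 2" by simp
          have aux: "1 + x + l \<le> 2 * (1 + x)" if "l \<le> 1" "0 \<le> x" for x l :: real
          proof -
            have "1 + x + l \<le> 2 + 2 * x" using that by linarith
            then show ?thesis by (simp add: distrib_left)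
          qed
          have eq: "1 + real (k+1) * ln 2 = 1 + real k * ln 2 + ln 2" by (simp add: algebra_simps)
          show ?thesis unfolding eq by (rule aux[OF l2 x0])
        qed
        then have "(1 + real (k+1) * ln 2) powr \<gamma> \<le> (2 * (1 + real k * ln 2)) powr \<gamma>"
          using g by (intro powr_mono2) (auto simp: add_pos_nonneg)
        also have "\<dots> = 2 powr \<gamma> * (1 + real k * ln 2) powr \<gamma>" using lk by (subst powr_mult) auto
        finally have R: "(1 + real (k+1) * ln 2) powr \<gamma> \<le> 2 powr \<gamma> * (1 + real k * ln 2) powr \<gamma>" .
        define X where "X = d powr \<beta> / den k * ((1/2::real)^k) powr s"
        have X0: "X \<ge> 0" using denpos[of k] by (simp add: X_def)
        have lhs: "c k * (((1/2::real)^k) powr s / (1 + real k * ln 2) powr \<gamma>) = X * ((1 + real (k+1) * ln 2) powr \<gamma> / (1 + real k * ln 2) powr \<gamma>)"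
          by (simp add: c_def X_def)
        have rhs: "d powr \<beta> * (ln (exp 1 / d)) powr 0 / den k * (((1/2)^k) powr s / (1 + real k * ln 2) powr 0) = X"
          using ld lk by (simp add: X_def)
        have "(1 + real (k+1) * ln 2) powr \<gamma> / (1 + real k * ln 2) powr \<gamma> \<le> 2 powr \<gamma>"
          using R lk by (simp add: divide_le_eq)
        then have "X * ((1 + real (k+1) * ln 2) powr \<gamma> / (1 + real k * ln 2) powr \<gamma>) \<le> X * 2 powr \<gamma>"
          using X0 by (intro mult_left_mono) auto
        then show ?thesis unfolding lhs rhs by (simp add: mult_ac)
      qed
      have "(\<Sum>k<n. c k * (C * (((1/2::real)^k) powr s / (1 + real k * ln 2) powr \<gamma>)))
          = C * (\<Sum>k<n. c k * (((1/2::real)^k) powr s / (1 + real k * ln 2) powr \<gamma>))"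
        by (simp add: sum_distrib_left mult_ac)
      also have "\<dots> \<le> C * (\<Sum>k<n. 2 powr \<gamma> * (d powr \<beta> * (ln (exp 1 / d)) powr 0 / den k * (((1/2)^k) powr s / (1 + real k * ln 2) powr 0)))"
        using C0 by (intro mult_left_mono sum_mono tk) auto
      also have "\<dots> = C * (2 powr \<gamma> * (\<Sum>k<n. d powr \<beta> * (ln (exp 1 / d)) powr 0 / den k * (((1/2)^k) powr s / (1 + real k * ln 2) powr 0)))"
        by (simp add: sum_distrib_left)
      also have "\<dots> \<le> C * (2 powr \<gamma> * Ms)"
        using Ms d0 C0 by (intro mult_left_mono) (auto simp: den_def e_def)
      finally show "(\<Sum>k<n. c k * (C * (((1/2::real)^k) powr s / (1 + real k * ln 2) powr \<gamma>))) \<le> C * (2 powr \<gamma> * Ms)" .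
    qed
    finally show "(\<integral>\<^sup>+ t\<in>{0..<1}.
         ennreal ((1 - r) powr \<beta> * (ln (exp 1 / (1 - t))) powr \<gamma> /
                  ((1 - t) powr q * (1 - r * t) powr (s + \<beta> - q))) \<partial>\<mu>) \<le> ennreal (C * (2 powr \<gamma> * Ms))"
      by (simp add: d_def e_def)
  qed
qed

lemma lower:
  fixes \<beta> \<gamma> q s M :: real and \<mu> :: "real measure" and g :: "real \<Rightarrow> real \<Rightarrow> real"
  assumes b: "\<beta> > 0" and gm: "\<gamma> \<ge> 0" and q: "0 \<le> q" and qs: "q < s"
    and fin: "fin_borel_measure_on_01 \<mu>"
    and bound: "\<And>t0. 0 \<le> t0 \<Longrightarrow> t0 < 1 \<Longrightarrow> (\<integral>\<^sup>+ t\<in>{0..<1}. ennreal (g t0 t) \<partial>\<mu>) \<le> ennreal M"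
    and ge: "\<And>t0 t. 0 \<le> t0 \<Longrightarrow> t0 < 1 \<Longrightarrow> t0 \<le> t \<Longrightarrow> t < 1 \<Longrightarrow>
      (1 - t0) powr \<beta> * (ln (exp 1 / (1 - t0))) powr \<gamma> / ((1 - t) powr q * (1 - t0 * t) powr (s + \<beta> - q)) \<le> g t0 t"
  shows "log_carleson \<gamma> s \<mu>"
proof -
  have sets: "sets \<mu> = sets borel" and fm: "finite_measure \<mu>" using fin by (auto simp: fin_borel_measure_on_01_def)
  define e where "e = s + \<beta> - q"
  have e0: "e > 0" using qs b by (simp add: e_def)
  define M' where "M' = max M 0"
  have M'0: "M' \<ge> 0" by (simp add: M'_def)
  show ?thesis unfolding log_carleson_def
  proof (intro exI[of _ "2 powr e * M' + 1"] conjI ballI)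
    show "0 < 2 powr e * M' + 1" using M'0 by (simp add: add_nonneg_pos)
    fix t0 :: real assume t0: "t0 \<in> {0..<1}"
    define d where "d = 1 - t0"
    have d0: "d > 0" "d \<le> 1" using t0 by (auto simp: d_def)
    define L where "L = ln (exp 1 / d)"
    have L1: "L \<ge> 1"
    proof -
      have "exp 1 \<le> exp 1 / d" using d0 by (simp add: le_divide_eq)
      then have "ln (exp 1) \<le> ln (exp 1 / d)" using d0 by (subst ln_le_cancel_iff) auto
      then show ?thesis by (simp add: L_def)
    qed
    define K0 where "K0 = L powr \<gamma> / (2 powr e * d powr s)"
    have K00: "K0 \<ge> 0" by (simp add: K0_def)
    have key: "K0 \<le> g t0 t" if t: "t0 \<le> t" "t < 1" for t
    proof -
      have A: "(1 - t) powr q \<le> d powr q" using t q by (intro powr_mono2) (auto simp: d_def)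
      have tt1: "t0 * t0 \<le> t0 * t" using t t0 by (intro mult_left_mono) auto
      have tt2: "0 \<le> (1 - t0) * (1 - t0)" by simp
      then have tt3: "0 \<le> 1 - 2 * t0 + t0 * t0" by (simp add: algebra_simps)
      have tt4: "t0 * t \<le> t" using mult_right_mono[of t0 1 t] t t0 by simp
      have Bl: "1 - t0 * t \<le> 2 * d" using tt1 tt3 by (simp add: d_def)
      have Bp: "0 < 1 - t0 * t" using tt4 t by linarith
      have B: "(1 - t0 * t) powr e \<le> (2 * d) powr e" using Bl Bp e0 by (intro powr_mono2) auto
      have denp: "0 < (1 - t) powr q * (1 - t0 * t) powr e" using t Bp by (intro mult_pos_pos) auto
      have den: "(1 - t) powr q * (1 - t0 * t) powr e \<le> d powr q * (2 * d) powr e"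
        using A B by (intro mult_mono) auto
      have "d powr \<beta> * L powr \<gamma> / (d powr q * (2 * d) powr e) \<le> d powr \<beta> * L powr \<gamma> / ((1 - t) powr q * (1 - t0 * t) powr e)"
        by (rule divide_left_mono[OF den]) (use denp den in auto)
      also have "\<dots> \<le> g t0 t" using ge[of t0 t] t t0 by (simp add: d_def L_def e_def)
      finally have X: "d powr \<beta> * L powr \<gamma> / (d powr q * (2 * d) powr e) \<le> g t0 t" .
      have p1: "(2 * d) powr e = 2 powr e * d powr e" using d0 by (subst powr_mult) auto
      have p2: "d powr q * d powr e = d powr s * d powr \<beta>"
      proof -
        have "d powr q * d powr e = d powr (q + e)" by (simp only: powr_add)
        also have "q + e = s + \<beta>" by (simp add: e_def)
        also have "d powr (s + \<beta>) = d powr s * d powr \<beta>" by (simp only: powr_add)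
        finally show ?thesis .
      qed
      have "d powr q * (2 * d) powr e = 2 powr e * d powr s * d powr \<beta>"
        unfolding p1 using p2 by (simp add: mult_ac)
      then have "d powr \<beta> * L powr \<gamma> / (d powr q * (2 * d) powr e) = K0"
        using d0 by (simp add: K0_def field_simps)
      then show ?thesis using X by simp
    qed
    have "ennreal K0 * emeasure \<mu> {t0..<1} = (\<integral>\<^sup>+ t. ennreal K0 * indicator {t0..<1} t \<partial>\<mu>)"
      using sets by (simp add: nn_integral_cmult_indicator)
    also have "\<dots> \<le> (\<integral>\<^sup>+ t\<in>{0..<1}. ennreal (g t0 t) \<partial>\<mu>)"
    proof (rule nn_integral_mono)
      fix t show "ennreal K0 * indicator {t0..<1} t \<le> ennreal (g t0 t) * indicator {0..<1} t"
      proof (cases "t \<in> {t0..<1}")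
        case True
        then have "t \<in> {0..<1}" using t0 by auto
        then show ?thesis using True key[of t] by (auto intro: ennreal_leI)
      qed simp
    qed
    also have "\<dots> \<le> ennreal M" using bound t0 by auto
    also have "\<dots> \<le> ennreal M'" by (intro ennreal_leI) (simp add: M'_def)
    finally have "ennreal K0 * emeasure \<mu> {t0..<1} \<le> ennreal M'" .
    moreover have "ennreal K0 * emeasure \<mu> {t0..<1} = ennreal (K0 * measure \<mu> {t0..<1})"
      using fm K00 by (simp add: finite_measure.emeasure_eq_measure ennreal_mult)
    ultimately have KM: "K0 * measure \<mu> {t0..<1} \<le> M'" using M'0 by simp
    have dsp: "d powr s > 0" using d0 by simp
    have "L powr \<gamma> * measure \<mu> {t0..<1} = (2 powr e * d powr s) * (K0 * measure \<mu> {t0..<1})"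
      using dsp by (simp add: K0_def field_simps)
    also have "\<dots> \<le> (2 powr e * d powr s) * M'" using KM dsp by (intro mult_left_mono) auto
    also have "\<dots> \<le> (2 powr e * M' + 1) * d powr s" using dsp by (simp add: algebra_simps)
    finally show "(ln (exp 1 / (1 - t0))) powr \<gamma> * measure \<mu> {t0..<1} \<le> (2 powr e * M' + 1) * (1 - t0) powr s"
      by (simp add: L_def d_def)
  qed
qed

lemma F3le:
  fixes w :: complex and t \<beta> \<gamma> q e :: real
  assumes w: "cmod w < 1" and t: "0 \<le> t" "t < 1" and e0: "e > 0" and q: "0 \<le> q"
  shows "(1 - cmod w) powr \<beta> * (ln (exp 1 / (1 - cmod w))) powr \<gamma> /
                  ((1 - t) powr q * (cmod (1 - w * complex_of_real t)) powr e)
     \<le> (1 - cmod w) powr \<beta> * (ln (exp 1 / (1 - cmod w))) powr \<gamma> /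
                  ((1 - t) powr q * (1 - cmod w * t) powr e)"
proof -
  have rt: "cmod w * t \<le> t" using mult_right_mono[of "cmod w" 1 t] w t by simp
  have p: "0 < 1 - cmod w * t" using rt t by linarith
  have "1 - cmod w * t = cmod (1::complex) - cmod (w * complex_of_real t)"
    using t by (simp add: norm_mult)
  also have "\<dots> \<le> cmod (1 - w * complex_of_real t)" by (rule norm_triangle_ineq2)
  finally have n: "1 - cmod w * t \<le> cmod (1 - w * complex_of_real t)" .
  have B: "(1 - cmod w * t) powr e \<le> (cmod (1 - w * complex_of_real t)) powr e"
    using n p e0 by (intro powr_mono2) auto
  have den: "(1 - t) powr q * (1 - cmod w * t) powr e \<le> (1 - t) powr q * (cmod (1 - w * complex_of_real t)) powr e"
    using B by (intro mult_left_mono) auto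
  have denp: "0 < (1 - t) powr q * (1 - cmod w * t) powr e" using t p by (intro mult_pos_pos) auto
  show ?thesis by (rule divide_left_mono[OF den]) (use denp den in auto)
qed

theorem proposition3p1:
  fixes \<beta> \<gamma> q s :: real and \<mu> :: "real measure"
  assumes "\<beta> > 0" and "\<gamma> \<ge> 0" and "0 \<le> q" and "q < s"
    and "fin_borel_measure_on_01 \<mu>"
  shows "(log_carleson \<gamma> s \<mu> \<longleftrightarrow>
      (SUP w\<in>ball (0::complex) 1. \<integral>\<^sup>+ t\<in>{0..<1}.
         ennreal ((1 - cmod w) powr \<beta> * (ln (exp 1 / (1 - cmod w))) powr \<gamma> /
                  ((1 - t) powr q * (1 - cmod w * t) powr (s + \<beta> - q))) \<partial>\<mu>) < \<infinity>)
    \<and> (log_carleson \<gamma> s \<mu> \<longleftrightarrow>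
      (SUP w\<in>ball (0::complex) 1. \<integral>\<^sup>+ t\<in>{0..<1}.
         ennreal ((1 - cmod w) powr \<beta> * (ln (exp 1 / (1 - cmod w))) powr \<gamma> /
                  ((1 - t) powr q * (cmod (1 - w * complex_of_real t)) powr (s + \<beta> - q))) \<partial>\<mu>) < \<infinity>)
    \<and> (log_carleson \<gamma> s \<mu> \<longleftrightarrow>
      (SUP w\<in>ball (0::complex) 1. \<integral>\<^sup>+ t\<in>{0..<1}.
         ennreal ((1 - cmod w) powr \<beta> * (ln (exp 1 / (1 - t))) powr \<gamma> /
                  ((1 - t) powr q * (1 - cmod w * t) powr (s + \<beta> - q))) \<partial>\<mu>) < \<infinity>)"
proof -
  note b = assms(1) and g = assms(2) and q = assms(3) and qs = assms(4) and fin = assms(5)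
  have e0: "s + \<beta> - q > 0" using b qs by simp
  have nr: "cmod (complex_of_real t0) = t0" if "0 \<le> t0" for t0 using that by simp
  have inball: "complex_of_real t0 \<in> ball 0 1" if "0 \<le> t0" "t0 < 1" for t0 using that by simp
  show ?thesis
  proof (intro conjI iffI)
    assume car: "log_carleson \<gamma> s \<mu>"
    obtain M where M: "\<forall>r. 0 \<le> r \<longrightarrow> r < 1 \<longrightarrow> (\<integral>\<^sup>+ t\<in>{0..<1}.
         ennreal ((1 - r) powr \<beta> * (ln (exp 1 / (1 - r))) powr \<gamma> /
                  ((1 - t) powr q * (1 - r * t) powr (s + \<beta> - q))) \<partial>\<mu>) \<le> ennreal M"
      using upper2[OF b g q qs fin car] by blast
    show "(SUP w\<in>ball (0::complex) 1. \<integral>\<^sup>+ t\<in>{0..<1}.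
         ennreal ((1 - cmod w) powr \<beta> * (ln (exp 1 / (1 - cmod w))) powr \<gamma> /
                  ((1 - t) powr q * (1 - cmod w * t) powr (s + \<beta> - q))) \<partial>\<mu>) < \<infinity>"
    proof (rule sup_le[where M = M])
      fix w :: complex assume "w \<in> ball 0 1"
      then have "cmod w < 1" by simp
      then show "(\<integral>\<^sup>+ t\<in>{0..<1}.
         ennreal ((1 - cmod w) powr \<beta> * (ln (exp 1 / (1 - cmod w))) powr \<gamma> /
                  ((1 - t) powr q * (1 - cmod w * t) powr (s + \<beta> - q))) \<partial>\<mu>) \<le> ennreal M"
        using M by simp
    qed
  next
    assume "(SUP w\<in>ball (0::complex) 1. \<integral>\<^sup>+ t\<in>{0..<1}.
         ennreal ((1 - cmod w) powr \<beta> * (ln (exp 1 / (1 - cmod w))) powr \<gamma> /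
                  ((1 - t) powr q * (1 - cmod w * t) powr (s + \<beta> - q))) \<partial>\<mu>) < \<infinity>"
    then obtain M where M: "\<And>w. w \<in> ball (0::complex) 1 \<Longrightarrow> (\<integral>\<^sup>+ t\<in>{0..<1}.
         ennreal ((1 - cmod w) powr \<beta> * (ln (exp 1 / (1 - cmod w))) powr \<gamma> /
                  ((1 - t) powr q * (1 - cmod w * t) powr (s + \<beta> - q))) \<partial>\<mu>) \<le> ennreal M"
      by (rule sup_fin) blast
    show "log_carleson \<gamma> s \<mu>"
    proof (rule lower[OF b g q qs fin, where M = M and g = "\<lambda>t0 t. (1 - t0) powr \<beta> * (ln (exp 1 / (1 - t0))) powr \<gamma> /
                  ((1 - t) powr q * (1 - t0 * t) powr (s + \<beta> - q))"])
      fix t0 :: real assume t0: "0 \<le> t0" "t0 < 1"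
      show "(\<integral>\<^sup>+ t\<in>{0..<1}. ennreal ((1 - t0) powr \<beta> * (ln (exp 1 / (1 - t0))) powr \<gamma> /
                  ((1 - t) powr q * (1 - t0 * t) powr (s + \<beta> - q))) \<partial>\<mu>) \<le> ennreal M"
        using M[OF inball[OF t0]] unfolding nr[OF t0(1)] .
    qed simp
  next
    assume car: "log_carleson \<gamma> s \<mu>"
    obtain M where M: "\<forall>r. 0 \<le> r \<longrightarrow> r < 1 \<longrightarrow> (\<integral>\<^sup>+ t\<in>{0..<1}.
         ennreal ((1 - r) powr \<beta> * (ln (exp 1 / (1 - r))) powr \<gamma> /
                  ((1 - t) powr q * (1 - r * t) powr (s + \<beta> - q))) \<partial>\<mu>) \<le> ennreal M"
      using upper2[OF b g q qs fin car] by blast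
    show "(SUP w\<in>ball (0::complex) 1. \<integral>\<^sup>+ t\<in>{0..<1}.
         ennreal ((1 - cmod w) powr \<beta> * (ln (exp 1 / (1 - cmod w))) powr \<gamma> /
                  ((1 - t) powr q * (cmod (1 - w * complex_of_real t)) powr (s + \<beta> - q))) \<partial>\<mu>) < \<infinity>"
    proof (rule sup_le[where M = M])
      fix w :: complex assume "w \<in> ball 0 1"
      then have w: "cmod w < 1" by simp
      have "(\<integral>\<^sup>+ t\<in>{0..<1}.
         ennreal ((1 - cmod w) powr \<beta> * (ln (exp 1 / (1 - cmod w))) powr \<gamma> /
                  ((1 - t) powr q * (cmod (1 - w * complex_of_real t)) powr (s + \<beta> - q))) \<partial>\<mu>)
        \<le> (\<integral>\<^sup>+ t\<in>{0..<1}.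
         ennreal ((1 - cmod w) powr \<beta> * (ln (exp 1 / (1 - cmod w))) powr \<gamma> /
                  ((1 - t) powr q * (1 - cmod w * t) powr (s + \<beta> - q))) \<partial>\<mu>)"
      proof (rule nn_integral_mono)
        fix t :: real
        show "ennreal ((1 - cmod w) powr \<beta> * (ln (exp 1 / (1 - cmod w))) powr \<gamma> /
                  ((1 - t) powr q * (cmod (1 - w * complex_of_real t)) powr (s + \<beta> - q))) * indicator {0..<1} t
          \<le> ennreal ((1 - cmod w) powr \<beta> * (ln (exp 1 / (1 - cmod w))) powr \<gamma> /
                  ((1 - t) powr q * (1 - cmod w * t) powr (s + \<beta> - q))) * indicator {0..<1} t"
        proof (cases "t \<in> {0..<1}")
          case True
          then have t: "0 \<le> t" "t < 1" by auto
          show ?thesis using True F3le[OF w t e0 q, of \<beta> \<gamma>] by (auto intro: ennreal_leI)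
        qed simp
      qed
      also have "\<dots> \<le> ennreal M" using M w by simp
      finally show "(\<integral>\<^sup>+ t\<in>{0..<1}.
         ennreal ((1 - cmod w) powr \<beta> * (ln (exp 1 / (1 - cmod w))) powr \<gamma> /
                  ((1 - t) powr q * (cmod (1 - w * complex_of_real t)) powr (s + \<beta> - q))) \<partial>\<mu>) \<le> ennreal M" .
    qed
  next
    assume "(SUP w\<in>ball (0::complex) 1. \<integral>\<^sup>+ t\<in>{0..<1}.
         ennreal ((1 - cmod w) powr \<beta> * (ln (exp 1 / (1 - cmod w))) powr \<gamma> /
                  ((1 - t) powr q * (cmod (1 - w * complex_of_real t)) powr (s + \<beta> - q))) \<partial>\<mu>) < \<infinity>"
    then obtain M where M: "\<And>w. w \<in> ball (0::complex) 1 \<Longrightarrow> (\<integral>\<^sup>+ t\<in>{0..<1}.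
         ennreal ((1 - cmod w) powr \<beta> * (ln (exp 1 / (1 - cmod w))) powr \<gamma> /
                  ((1 - t) powr q * (cmod (1 - w * complex_of_real t)) powr (s + \<beta> - q))) \<partial>\<mu>) \<le> ennreal M"
      by (rule sup_fin) blast
    show "log_carleson \<gamma> s \<mu>"
    proof (rule lower[OF b g q qs fin, where M = M and g = "\<lambda>t0 t. (1 - t0) powr \<beta> * (ln (exp 1 / (1 - t0))) powr \<gamma> /
                  ((1 - t) powr q * (cmod (1 - complex_of_real t0 * complex_of_real t)) powr (s + \<beta> - q))"])
      fix t0 :: real assume t0: "0 \<le> t0" "t0 < 1"
      show "(\<integral>\<^sup>+ t\<in>{0..<1}. ennreal ((1 - t0) powr \<beta> * (ln (exp 1 / (1 - t0))) powr \<gamma> /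
                  ((1 - t) powr q * (cmod (1 - complex_of_real t0 * complex_of_real t)) powr (s + \<beta> - q))) \<partial>\<mu>) \<le> ennreal M"
        using M[OF inball[OF t0]] unfolding nr[OF t0(1)] .
    next
      fix t0 t :: real assume t0: "0 \<le> t0" "t0 < 1" and t: "t0 \<le> t" "t < 1"
      have rt: "t0 * t \<le> t" using mult_right_mono[of t0 1 t] t0 t by simp
      have "1 - complex_of_real t0 * complex_of_real t = complex_of_real (1 - t0 * t)" by simp
      then have "cmod (1 - complex_of_real t0 * complex_of_real t) = 1 - t0 * t"
        using rt t by (simp only: norm_of_real)
      then show "(1 - t0) powr \<beta> * (ln (exp 1 / (1 - t0))) powr \<gamma> /
                  ((1 - t) powr q * (1 - t0 * t) powr (s + \<beta> - q)) \<le> (1 - t0) powr \<beta> * (ln (exp 1 / (1 - t0))) powr \<gamma> /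
                  ((1 - t) powr q * (cmod (1 - complex_of_real t0 * complex_of_real t)) powr (s + \<beta> - q))"
        by simp
    qed
  next
    assume car: "log_carleson \<gamma> s \<mu>"
    obtain M where M: "\<forall>r. 0 \<le> r \<longrightarrow> r < 1 \<longrightarrow> (\<integral>\<^sup>+ t\<in>{0..<1}.
         ennreal ((1 - r) powr \<beta> * (ln (exp 1 / (1 - t))) powr \<gamma> /
                  ((1 - t) powr q * (1 - r * t) powr (s + \<beta> - q))) \<partial>\<mu>) \<le> ennreal M"
      using upper4[OF b g q qs fin car] by blast
    show "(SUP w\<in>ball (0::complex) 1. \<integral>\<^sup>+ t\<in>{0..<1}.
         ennreal ((1 - cmod w) powr \<beta> * (ln (exp 1 / (1 - t))) powr \<gamma> /
                  ((1 - t) powr q * (1 - cmod w * t) powr (s + \<beta> - q))) \<partial>\<mu>) < \<infinity>"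
    proof (rule sup_le[where M = M])
      fix w :: complex assume "w \<in> ball 0 1"
      then have "cmod w < 1" by simp
      then show "(\<integral>\<^sup>+ t\<in>{0..<1}.
         ennreal ((1 - cmod w) powr \<beta> * (ln (exp 1 / (1 - t))) powr \<gamma> /
                  ((1 - t) powr q * (1 - cmod w * t) powr (s + \<beta> - q))) \<partial>\<mu>) \<le> ennreal M"
        using M by simp
    qed
  next
    assume "(SUP w\<in>ball (0::complex) 1. \<integral>\<^sup>+ t\<in>{0..<1}.
         ennreal ((1 - cmod w) powr \<beta> * (ln (exp 1 / (1 - t))) powr \<gamma> /
                  ((1 - t) powr q * (1 - cmod w * t) powr (s + \<beta> - q))) \<partial>\<mu>) < \<infinity>"
    then obtain M where M: "\<And>w. w \<in> ball (0::complex) 1 \<Longrightarrow> (\<integral>\<^sup>+ t\<in>{0..<1}.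
         ennreal ((1 - cmod w) powr \<beta> * (ln (exp 1 / (1 - t))) powr \<gamma> /
                  ((1 - t) powr q * (1 - cmod w * t) powr (s + \<beta> - q))) \<partial>\<mu>) \<le> ennreal M"
      by (rule sup_fin) blast
    show "log_carleson \<gamma> s \<mu>"
    proof (rule lower[OF b g q qs fin, where M = M and g = "\<lambda>t0 t. (1 - t0) powr \<beta> * (ln (exp 1 / (1 - t))) powr \<gamma> /
                  ((1 - t) powr q * (1 - t0 * t) powr (s + \<beta> - q))"])
      fix t0 :: real assume t0: "0 \<le> t0" "t0 < 1"
      show "(\<integral>\<^sup>+ t\<in>{0..<1}. ennreal ((1 - t0) powr \<beta> * (ln (exp 1 / (1 - t))) powr \<gamma> /
                  ((1 - t) powr q * (1 - t0 * t) powr (s + \<beta> - q))) \<partial>\<mu>) \<le> ennreal M"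
        using M[OF inball[OF t0]] unfolding nr[OF t0(1)] .
    next
      fix t0 t :: real assume t0: "0 \<le> t0" "t0 < 1" and t: "t0 \<le> t" "t < 1"
      have rt: "t0 * t \<le> t" using mult_right_mono[of t0 1 t] t0 t by simp
      have l0: "0 \<le> ln (exp 1 / (1 - t0))"
      proof -
        have "exp 1 \<le> exp 1 / (1 - t0)" using t0 by (simp add: le_divide_eq)
        moreover have "(1::real) \<le> exp 1" by simp
        ultimately have "1 \<le> exp 1 / (1 - t0)" by linarith
        then show ?thesis by simp
      qed
      have "exp 1 / (1 - t0) \<le> exp 1 / (1 - t)" using t t0 by (intro divide_left_mono) auto
      then have "ln (exp 1 / (1 - t0)) \<le> ln (exp 1 / (1 - t))" using t t0 by (subst ln_le_cancel_iff) auto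
      then have N: "(1 - t0) powr \<beta> * (ln (exp 1 / (1 - t0))) powr \<gamma> \<le> (1 - t0) powr \<beta> * (ln (exp 1 / (1 - t))) powr \<gamma>"
        using l0 g by (intro mult_left_mono powr_mono2) auto
      have dp: "0 < (1 - t) powr q * (1 - t0 * t) powr (s + \<beta> - q)" using t rt by (intro mult_pos_pos) auto
      show "(1 - t0) powr \<beta> * (ln (exp 1 / (1 - t0))) powr \<gamma> /
                  ((1 - t) powr q * (1 - t0 * t) powr (s + \<beta> - q)) \<le> (1 - t0) powr \<beta> * (ln (exp 1 / (1 - t))) powr \<gamma> /
                  ((1 - t) powr q * (1 - t0 * t) powr (s + \<beta> - q))"
        using N dp by (simp add: divide_right_mono)
    qed
  qed
qed

end
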